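(* Let $\mathfrak n$ be a 2-step nilpotent real Lie algebra with inner product $\langle\cdot,\cdot\rangle$, center $\mathfrak z$, $\mathfrak v=\mathfrak z^\perp$, commutator $C(\mathfrak n)=[\mathfrak n,\mathfrak n]$, and maps $j_Z$ as in the context. Let $F:\mathfrak n\to\mathfrak n$ be linear and write $F=F_1+F_2$ uniquely with $F_1(\mathfrak v)\subseteq\mathfrak v$, $F_1(\mathfrak z)\subseteq\mathfrak z$, $F_2(\mathfrak v)\subseteq\mathfrak z$, $F_2(\mathfrak z)\subseteq\mathfrak v$. Then: (i) a skew-symmetric $F$ gives rise to a closed 2-form $\omega(X,Y)=\langle F(X),Y\rangle$ if and only if $F_1$ and $F_2$ are skew-symmetric, $F_1(Z)$ is orthogonal to $C(\mathfrak n)$ for all $Z\in\mathfrak z$, and $\langle F_2(U),[V,W]\rangle+\langle F_2(V),[W,U]\rangle+\langle F_2(W),[U,V]\rangle=0$ for all $U,V,W\in\mathfrak v$; (ii) exact left-invariant 2-forms on $\mathfrak n$ (i.e. $d\eta$ for $\eta\in\mathfrak n^*$) are in one-to-one correspondence with the skew-symmetric maps $j_{\tilde Z}$ with $\tilde Z\in C(\mathfrak n)$ (the exact 2-form $d\ell_{\tilde Z}$, $\ell_{\tilde Z}=\langle\tilde Z,\cdot\rangle$, having Lorentz force $j_{\tilde Z}$ on $\mathfrak v$, extended by zero on $\mathfrak z$).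
   Context: A real Lie algebra is 2-step nilpotent if $[[U,V],W]=0$ for all $U,V,W$. For $Z\in\mathfrak z$, $j_Z:\mathfrak v\to\mathfrak v$ is defined by $\langle j_ZV,W\rangle=\langle Z,[V,W]\rangle$ for $V,W\in\mathfrak v$. For a left-invariant 1-form $\eta$, $d\eta(U,V)=-\eta([U,V])$ up to the sign convention; here $d\ell_{\tilde Z}(U,V)=\langle\tilde Z,[U,V]\rangle$. A 2-form $\omega$ on $\mathfrak n$ is closed iff $\omega([U,V],W)+\omega([V,W],U)+\omega([W,U],V)=0$ for all $U,V,W\in\mathfrak n$. *)

theory Defs
  imports "HOL-Analysis.Analysis"
begin

definition lie_algebra :: "('a::euclidean_space \<Rightarrow> 'a \<Rightarrow> 'a) \<Rightarrow> bool" where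
  "lie_algebra br \<longleftrightarrow> bilinear br \<and> (\<forall>X. br X X = 0) \<and>
     (\<forall>X Y Z. br X (br Y Z) + br Y (br Z X) + br Z (br X Y) = 0)"

definition two_step_nilpotent :: "('a::euclidean_space \<Rightarrow> 'a \<Rightarrow> 'a) \<Rightarrow> bool" where
  "two_step_nilpotent br \<longleftrightarrow> lie_algebra br \<and> (\<forall>U V W. br (br U V) W = 0)"

definition center :: "('a::euclidean_space \<Rightarrow> 'a \<Rightarrow> 'a) \<Rightarrow> 'a set" where
  "center br = {Z. \<forall>X. br Z X = 0}"

definition vpart :: "('a::euclidean_space \<Rightarrow> 'a \<Rightarrow> 'a) \<Rightarrow> 'a set" where
  "vpart br = {V. \<forall>Z\<in>center br. V \<bullet> Z = 0}"

definition commutator :: "('a::euclidean_space \<Rightarrow> 'a \<Rightarrow> 'a) \<Rightarrow> 'a set" where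
  "commutator br = span {br U V | U V. True}"

definition jmap :: "('a::euclidean_space \<Rightarrow> 'a \<Rightarrow> 'a) \<Rightarrow> 'a \<Rightarrow> 'a \<Rightarrow> 'a" where
  "jmap br Z V = (THE u. u \<in> vpart br \<and> (\<forall>W\<in>vpart br. u \<bullet> W = Z \<bullet> br V W))"

definition projv :: "('a::euclidean_space \<Rightarrow> 'a \<Rightarrow> 'a) \<Rightarrow> 'a \<Rightarrow> 'a" where
  "projv br X = (THE V. V \<in> vpart br \<and> X - V \<in> center br)"

definition jext :: "('a::euclidean_space \<Rightarrow> 'a \<Rightarrow> 'a) \<Rightarrow> 'a \<Rightarrow> 'a \<Rightarrow> 'a" where
  "jext br Z X = jmap br Z (projv br X)"

definition skew_symmetric :: "('a::real_inner \<Rightarrow> 'a) \<Rightarrow> bool" where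
  "skew_symmetric F \<longleftrightarrow> (\<forall>X Y. F X \<bullet> Y = - (X \<bullet> F Y))"

text \<open>closedness of a (left-invariant) 2-form on n\<close>
definition closed_form :: "('a::euclidean_space \<Rightarrow> 'a \<Rightarrow> 'a) \<Rightarrow> ('a \<Rightarrow> 'a \<Rightarrow> real) \<Rightarrow> bool" where
  "closed_form br \<omega> \<longleftrightarrow>
     (\<forall>U V W. \<omega> (br U V) W + \<omega> (br V W) U + \<omega> (br W U) V = 0)"

text \<open>d eta (U,V) = eta([U,V]) (sign convention as for d l_Z below)\<close>
definition dform :: "('a::euclidean_space \<Rightarrow> 'a \<Rightarrow> 'a) \<Rightarrow> ('a \<Rightarrow> real) \<Rightarrow> 'a \<Rightarrow> 'a \<Rightarrow> real" where
  "dform br \<eta> U V = \<eta> (br U V)"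

definition exact_form :: "('a::euclidean_space \<Rightarrow> 'a \<Rightarrow> 'a) \<Rightarrow> ('a \<Rightarrow> 'a \<Rightarrow> real) \<Rightarrow> bool" where
  "exact_form br \<omega> \<longleftrightarrow> (\<exists>\<eta>. linear \<eta> \<and> \<omega> = dform br \<eta>)"

definition ell :: "'a::real_inner \<Rightarrow> 'a \<Rightarrow> real" where
  "ell Z X = Z \<bullet> X"

end

theory Submission
  imports Defs
begin

lemma nil_bil: "two_step_nilpotent br \<Longrightarrow> bilinear br"
  by (simp add: two_step_nilpotent_def lie_algebra_def)

lemma nil_anti: assumes "two_step_nilpotent br" shows "br X Y = - br Y X"
proof -
  have b: "bilinear br" using nil_bil[OF assms] .
  have al: "\<And>X. br X X = 0" using assms by (simp add: two_step_nilpotent_def lie_algebra_def)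
  have "0 = br (X+Y) (X+Y)" using al by simp
  also have "\<dots> = br X X + br X Y + br Y X + br Y Y"
    by (simp add: bilinear_ladd[OF b] bilinear_radd[OF b])
  finally show ?thesis using al by (simp add: eq_neg_iff_add_eq_0 add.assoc)
qed

lemma br_center: "two_step_nilpotent br \<Longrightarrow> br U V \<in> center br"
  by (simp add: two_step_nilpotent_def center_def)

lemma center_l: "Z \<in> center br \<Longrightarrow> br Z X = 0"
  by (simp add: center_def)

lemma center_r: "two_step_nilpotent br \<Longrightarrow> Z \<in> center br \<Longrightarrow> br X Z = 0"
  by (metis center_l neg_equal_0_iff_equal nil_anti)

lemma subspace_center: assumes "two_step_nilpotent br" shows "subspace (center br)"
  using nil_bil[OF assms]
  by (auto simp: subspace_def center_def bilinear_lzero bilinear_ladd bilinear_lmul)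

lemma subspace_vpart: "subspace (vpart br)"
  by (auto simp: subspace_def vpart_def inner_add_left)

lemma orth_vz: "V \<in> vpart br \<Longrightarrow> Z \<in> center br \<Longrightarrow> V \<bullet> Z = 0 \<and> Z \<bullet> V = 0"
  unfolding vpart_def by (metis (mono_tags, lifting) mem_Collect_eq inner_commute)

lemma ovz1: "V \<in> vpart br \<Longrightarrow> Z \<in> center br \<Longrightarrow> V \<bullet> Z = 0"
  using orth_vz by blast
lemma ovz2: "V \<in> vpart br \<Longrightarrow> Z \<in> center br \<Longrightarrow> Z \<bullet> V = 0"
  using orth_vz by blast

lemma vz_zero: "X \<in> vpart br \<Longrightarrow> X \<in> center br \<Longrightarrow> X = 0"
  using orth_vz by fastforce

lemma projv_ex: assumes "two_step_nilpotent br"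
  shows "\<exists>V. V \<in> vpart br \<and> X - V \<in> center br"
proof -
  obtain y z where y: "y \<in> span (center br)" and z: "\<And>w. w \<in> span (center br) \<Longrightarrow> orthogonal z w"
    and x: "X = y + z" using orthogonal_subspace_decomp_exists[of "center br" X] by blast
  have sc: "span (center br) = center br" using subspace_center[OF assms] by simp
  have "z \<in> vpart br" using z sc by (auto simp: vpart_def orthogonal_def)
  moreover have "X - z \<in> center br" using x y sc by simp
  ultimately show ?thesis by blast
qed

lemma projv_uniq: assumes "two_step_nilpotent br"
  and "V1 \<in> vpart br" "X - V1 \<in> center br" "V2 \<in> vpart br" "X - V2 \<in> center br"
  shows "V1 = V2"
proof -
  have "V1 - V2 \<in> vpart br" using assms subspace_vpart[of br] by (simp add: subspace_diff)
  moreover have "V1 - V2 = (X - V2) - (X - V1)" by simp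
  hence "V1 - V2 \<in> center br" using assms subspace_center[OF assms(1)] by (metis subspace_diff)
  ultimately show ?thesis using vz_zero by fastforce
qed

lemma projv: assumes "two_step_nilpotent br"
  shows "projv br X \<in> vpart br \<and> X - projv br X \<in> center br"
proof -
  obtain V where V: "V \<in> vpart br \<and> X - V \<in> center br" using projv_ex[OF assms] by blast
  show ?thesis unfolding projv_def
    by (rule theI[of _ V]) (use V projv_uniq[OF assms] in blast)+
qed

lemma projv_eq: assumes "two_step_nilpotent br" "V \<in> vpart br" "X - V \<in> center br"
  shows "projv br X = V"
  using projv[OF assms(1)] projv_uniq[OF assms(1)] assms by blast

lemma br_proj: assumes N: "two_step_nilpotent br"
  shows "br X Y = br (projv br X) (projv br Y)"
proof -
  have b: "bilinear br" using nil_bil[OF N] .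
  have 1: "br (X - projv br X) Y = 0" using projv[OF N] center_l by blast
  have 2: "br (projv br X) (Y - projv br Y) = 0" using projv[OF N] center_r[OF N] by blast
  show ?thesis using 1 2 by (simp add: bilinear_lsub[OF b] bilinear_rsub[OF b])
qed

lemma decomp: assumes N: "two_step_nilpotent br"
  obtains V Z where "V \<in> vpart br" "Z \<in> center br" "X = V + Z"
  using projv[OF N, of X] by (metis add.commute diff_add_cancel)

lemma orthC: assumes "\<And>U V. D \<bullet> br U V = 0" "C \<in> commutator br" shows "D \<bullet> C = 0"
proof -
  have "C \<in> {C. D \<bullet> C = 0}"
    using assms(2) unfolding commutator_def
  proof (induct rule: span_induct)
    case base show ?case by (auto simp: subspace_def inner_add_right)
  next
    case (step x) then show ?case using assms(1) by auto
  qed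
  thus ?thesis by simp
qed

lemma eq_on_C: assumes "\<And>U V. Z1 \<bullet> br U V = Z2 \<bullet> br U V" "Z1 \<in> commutator br" "Z2 \<in> commutator br"
  shows "Z1 = Z2"
proof -
  have sub: "subspace (commutator br)" unfolding commutator_def by simp
  have "Z1 - Z2 \<in> commutator br" using assms sub by (simp add: subspace_diff)
  moreover have "\<And>U V. (Z1 - Z2) \<bullet> br U V = 0" using assms(1) by (simp add: inner_diff_left)
  ultimately have "(Z1 - Z2) \<bullet> (Z1 - Z2) = 0" using orthC by blast
  thus ?thesis by simp
qed

lemma jmap: assumes N: "two_step_nilpotent br"
  shows "jmap br Z V \<in> vpart br \<and> (\<forall>W\<in>vpart br. jmap br Z V \<bullet> W = Z \<bullet> br V W)"
proof -
  have b: "bilinear br" using nil_bil[OF N] .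
  let ?f = "\<lambda>W. Z \<bullet> br V W"
  have lf: "linear ?f"
    by (rule linearI) (simp_all add: bilinear_radd[OF b] bilinear_rmul[OF b] inner_add_right)
  define w where "w = adjoint ?f 1"
  have w: "\<And>W. W \<bullet> w = ?f W" using adjoint_works[OF lf] unfolding w_def by simp
  define u where "u = projv br w"
  have u: "u \<in> vpart br" "w - u \<in> center br" using projv[OF N] u_def by auto
  have ex: "u \<in> vpart br \<and> (\<forall>W\<in>vpart br. u \<bullet> W = Z \<bullet> br V W)"
  proof (intro conjI ballI)
    fix W assume W: "W \<in> vpart br"
    have "u \<bullet> W = w \<bullet> W - (w - u) \<bullet> W" by (simp add: inner_diff_left)
    also have "\<dots> = w \<bullet> W" using orth_vz[OF W u(2)] by simp
    finally show "u \<bullet> W = Z \<bullet> br V W" using w by (simp add: inner_commute)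
  qed (fact u)
  have un: "\<And>u'. u' \<in> vpart br \<and> (\<forall>W\<in>vpart br. u' \<bullet> W = Z \<bullet> br V W) \<Longrightarrow> u' = u"
  proof -
    fix u' assume h: "u' \<in> vpart br \<and> (\<forall>W\<in>vpart br. u' \<bullet> W = Z \<bullet> br V W)"
    have d: "u' - u \<in> vpart br" using h u subspace_vpart[of br] by (simp add: subspace_diff)
    have "(u' - u) \<bullet> (u' - u) = u' \<bullet> (u' - u) - u \<bullet> (u' - u)" by (simp add: inner_diff_left)
    also have "\<dots> = 0" using h ex d by simp
    finally show "u' = u" by simp
  qed
  show ?thesis unfolding jmap_def by (rule theI[of _ u]) (use ex un in blast)+
qed

lemma jext_inner: assumes N: "two_step_nilpotent br"
  shows "jext br Z X \<bullet> Y = Z \<bullet> br X Y"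
proof -
  let ?j = "jmap br Z (projv br X)"
  have j: "?j \<in> vpart br" "\<forall>W\<in>vpart br. ?j \<bullet> W = Z \<bullet> br (projv br X) W" using jmap[OF N] by auto
  have "?j \<bullet> Y = ?j \<bullet> projv br Y + ?j \<bullet> (Y - projv br Y)" by (simp add: inner_diff_right)
  also have "\<dots> = ?j \<bullet> projv br Y" using orth_vz[OF j(1)] projv[OF N] by simp
  also have "\<dots> = Z \<bullet> br X Y" using j projv[OF N] br_proj[OF N, of X Y] by simp
  finally show ?thesis by (simp add: jext_def)
qed

lemma part1:
  assumes N: "two_step_nilpotent br"
    and lF: "linear F" and sF: "skew_symmetric F" and l1: "linear F1" and l2: "linear F2"
    and FF: "\<forall>X. F X = F1 X + F2 X"
    and h1: "F1 ` vpart br \<subseteq> vpart br" and h2: "F1 ` center br \<subseteq> center br"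
    and h3: "F2 ` vpart br \<subseteq> center br" and h4: "F2 ` center br \<subseteq> vpart br"
  shows "closed_form br (\<lambda>X Y. F X \<bullet> Y) \<longleftrightarrow>
           skew_symmetric F1 \<and> skew_symmetric F2 \<and>
           (\<forall>Z\<in>center br. \<forall>C\<in>commutator br. F1 Z \<bullet> C = 0) \<and>
           (\<forall>U\<in>vpart br. \<forall>V\<in>vpart br. \<forall>W\<in>vpart br.
              F2 U \<bullet> br V W + F2 V \<bullet> br W U + F2 W \<bullet> br U V = 0)"
proof -
  have Fs: "\<And>X Y. F X \<bullet> Y = - (X \<bullet> F Y)" using sF by (simp add: skew_symmetric_def)
  have FvZ: "\<And>V Z. V \<in> vpart br \<Longrightarrow> Z \<in> center br \<Longrightarrow> F V \<bullet> Z = F2 V \<bullet> Z \<and> V \<bullet> F Z = V \<bullet> F2 Z \<and> F Z \<bullet> V = F2 Z \<bullet> V \<and> Z \<bullet> F V = Z \<bullet> F2 V"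
  proof -
    fix V Z assume V: "V \<in> vpart br" and Z: "Z \<in> center br"
    have a: "F1 V \<in> vpart br" "F1 Z \<in> center br" using h1 h2 V Z by auto
    thus "?thesis V Z" using FF orth_vz[OF a(1) Z] orth_vz[OF V a(2)] by (simp add: inner_add_left inner_add_right)
  qed
  have FvV: "\<And>V W. V \<in> vpart br \<Longrightarrow> W \<in> vpart br \<Longrightarrow> F V \<bullet> W = F1 V \<bullet> W"
  proof -
    fix V W assume V: "V \<in> vpart br" and W: "W \<in> vpart br"
    have "F2 V \<in> center br" using h3 V by auto
    thus "?thesis V W" using FF V W by (simp add: ovz1 ovz2 inner_add_left)
  qed
  have FzZ: "\<And>Z Y. Z \<in> center br \<Longrightarrow> Y \<in> center br \<Longrightarrow> F Z \<bullet> Y = F1 Z \<bullet> Y"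
  proof -
    fix Z Y assume Z: "Z \<in> center br" and Y: "Y \<in> center br"
    have "F2 Z \<in> vpart br" using h4 Z by auto
    thus "?thesis Z Y" using FF Z Y by (simp add: ovz1 ovz2 inner_add_left)
  qed
  have s1: "skew_symmetric F1" unfolding skew_symmetric_def
  proof (intro allI)
    fix X Y
    obtain Xv Xz where X: "Xv \<in> vpart br" "Xz \<in> center br" "X = Xv + Xz" using decomp[OF N] by blast
    obtain Yv Yz where Y: "Yv \<in> vpart br" "Yz \<in> center br" "Y = Yv + Yz" using decomp[OF N] by blast
    have m: "F1 Xv \<in> vpart br" "F1 Xz \<in> center br" "F1 Yv \<in> vpart br" "F1 Yz \<in> center br"
      using h1 h2 X Y by auto
    have "F1 X \<bullet> Y = F1 Xv \<bullet> Yv + F1 Xz \<bullet> Yz"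
      using X Y m by (simp add: ovz1 ovz2 linear_add[OF l1] inner_add_left inner_add_right)
    also have "\<dots> = F Xv \<bullet> Yv + F Xz \<bullet> Yz" using FvV FzZ X Y by simp
    also have "\<dots> = - (Xv \<bullet> F Yv + Xz \<bullet> F Yz)" using Fs by simp
    also have "\<dots> = - (F Yv \<bullet> Xv + F Yz \<bullet> Xz)" by (simp add: inner_commute)
    also have "\<dots> = - (F1 Yv \<bullet> Xv + F1 Yz \<bullet> Xz)" using FvV FzZ X Y by simp
    also have "\<dots> = - (X \<bullet> F1 Y)"
      using X Y m by (simp add: ovz1 ovz2 linear_add[OF l1] inner_add_left inner_add_right inner_commute)
    finally show "F1 X \<bullet> Y = - (X \<bullet> F1 Y)" .
  qed
  have s2: "skew_symmetric F2" unfolding skew_symmetric_def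
  proof (intro allI)
    fix X Y
    obtain Xv Xz where X: "Xv \<in> vpart br" "Xz \<in> center br" "X = Xv + Xz" using decomp[OF N] by blast
    obtain Yv Yz where Y: "Yv \<in> vpart br" "Yz \<in> center br" "Y = Yv + Yz" using decomp[OF N] by blast
    have m: "F2 Xv \<in> center br" "F2 Xz \<in> vpart br" "F2 Yv \<in> center br" "F2 Yz \<in> vpart br"
      using h3 h4 X Y by auto
    have "F2 X \<bullet> Y = F2 Xv \<bullet> Yz + F2 Xz \<bullet> Yv"
      using X Y m by (simp add: ovz1 ovz2 linear_add[OF l2] inner_add_left inner_add_right)
    also have "\<dots> = F Xv \<bullet> Yz + F Xz \<bullet> Yv" using FvZ X Y by simp
    also have "\<dots> = - (Xv \<bullet> F Yz + Xz \<bullet> F Yv)" using Fs by simp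
    also have "\<dots> = - (Xv \<bullet> F2 Yz + Xz \<bullet> F2 Yv)" using FvZ X Y by simp
    also have "\<dots> = - (X \<bullet> F2 Y)"
      using X Y m by (simp add: ovz1 ovz2 linear_add[OF l2] inner_add_left inner_add_right)
    finally show "F2 X \<bullet> Y = - (X \<bullet> F2 Y)" .
  qed
  have s1': "\<And>X Y. F1 X \<bullet> Y = - (X \<bullet> F1 Y)" using s1 by (simp add: skew_symmetric_def)
  have s2': "\<And>X Y. F2 X \<bullet> Y = - (X \<bullet> F2 Y)" using s2 by (simp add: skew_symmetric_def)
  have F0: "F 0 = 0" using linear_0[OF lF] .
  show ?thesis
  proof
    assume cl: "closed_form br (\<lambda>X Y. F X \<bullet> Y)"
    have cl': "\<And>U V W. F (br U V) \<bullet> W + F (br V W) \<bullet> U + F (br W U) \<bullet> V = 0"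
      using cl by (simp add: closed_form_def)
    have c3: "\<forall>Z\<in>center br. \<forall>C\<in>commutator br. F1 Z \<bullet> C = 0"
    proof (intro ballI)
      fix Z C assume Z: "Z \<in> center br" and C: "C \<in> commutator br"
      have "\<And>U V. F1 Z \<bullet> br U V = 0"
      proof -
        fix U V
        have "F (br U V) \<bullet> Z = 0" using cl'[of U V Z] center_l[OF Z] center_r[OF N Z] F0 by simp
        hence "F1 (br U V) \<bullet> Z = 0"
          using FzZ[OF br_center[OF N] Z] by simp
        thus "F1 Z \<bullet> br U V = 0" using s1' by (simp add: inner_commute)
      qed
      thus "F1 Z \<bullet> C = 0" using orthC C by blast
    qed
    have c4: "\<forall>U\<in>vpart br. \<forall>V\<in>vpart br. \<forall>W\<in>vpart br.
              F2 U \<bullet> br V W + F2 V \<bullet> br W U + F2 W \<bullet> br U V = 0"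
    proof (intro ballI)
      fix U V W assume U: "U \<in> vpart br" and V: "V \<in> vpart br" and W: "W \<in> vpart br"
      have e: "\<And>A B C. C \<in> vpart br \<Longrightarrow> F (br A B) \<bullet> C = - (F2 C \<bullet> br A B)"
        using FvZ br_center[OF N] s2' by (metis inner_commute)
      show "F2 U \<bullet> br V W + F2 V \<bullet> br W U + F2 W \<bullet> br U V = 0"
        using cl'[of U V W] e[OF U] e[OF V] e[OF W] by simp
    qed
    show "skew_symmetric F1 \<and> skew_symmetric F2 \<and>
           (\<forall>Z\<in>center br. \<forall>C\<in>commutator br. F1 Z \<bullet> C = 0) \<and>
           (\<forall>U\<in>vpart br. \<forall>V\<in>vpart br. \<forall>W\<in>vpart br.
              F2 U \<bullet> br V W + F2 V \<bullet> br W U + F2 W \<bullet> br U V = 0)" using s1 s2 c3 c4 by blast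
  next
    assume h: "skew_symmetric F1 \<and> skew_symmetric F2 \<and>
           (\<forall>Z\<in>center br. \<forall>C\<in>commutator br. F1 Z \<bullet> C = 0) \<and>
           (\<forall>U\<in>vpart br. \<forall>V\<in>vpart br. \<forall>W\<in>vpart br.
              F2 U \<bullet> br V W + F2 V \<bullet> br W U + F2 W \<bullet> br U V = 0)"
    have key: "\<And>U V W. F (br U V) \<bullet> W = - (F2 (projv br W) \<bullet> br (projv br U) (projv br V))"
    proof -
      fix U V W
      let ?B = "br (projv br U) (projv br V)"
      have B: "?B \<in> center br" "?B \<in> commutator br"
        using br_center[OF N] unfolding commutator_def by (auto intro: span_base)
      obtain Wv Wz where Wd: "Wv \<in> vpart br" "Wz \<in> center br" "W = Wv + Wz" using decomp[OF N] by blast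
      have pW: "projv br W = Wv" using projv_eq[OF N Wd(1)] Wd by simp
      have m: "F1 Wv \<in> vpart br" "F2 Wz \<in> vpart br" using h1 h4 Wd by auto
      have z: "F1 Wz \<bullet> ?B = 0" using h Wd(2) B(2) by blast
      have "F (br U V) \<bullet> W = F1 ?B \<bullet> W + F2 ?B \<bullet> W" using br_proj[OF N, of U V] FF
        by (simp add: inner_add_left)
      also have "\<dots> = - (?B \<bullet> F1 W) - (?B \<bullet> F2 W)" using s1' s2' by simp
      also have "\<dots> = - (?B \<bullet> F2 Wv)"
        using Wd m z orth_vz[OF m(1) B(1)] orth_vz[OF m(2) B(1)]
        by (simp add: linear_add[OF l1] linear_add[OF l2] inner_add_right inner_add_left inner_commute)
      finally show "?thesis U V W" using pW by (simp add: inner_commute)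
    qed
    show "closed_form br (\<lambda>X Y. F X \<bullet> Y)" unfolding closed_form_def
    proof (intro allI)
      fix U V W
      have "F2 (projv br U) \<bullet> br (projv br V) (projv br W) + F2 (projv br V) \<bullet> br (projv br W) (projv br U)
          + F2 (projv br W) \<bullet> br (projv br U) (projv br V) = 0" using h projv[OF N] by blast
      then show "F (br U V) \<bullet> W + F (br V W) \<bullet> U + F (br W U) \<bullet> V = 0"
        using key by simp
    qed
  qed
qed

theorem mainTheorem3:
  fixes br :: "'a::euclidean_space \<Rightarrow> 'a \<Rightarrow> 'a"
  assumes "two_step_nilpotent br"
  shows
   "(\<forall>F F1 F2. linear F \<and> skew_symmetric F \<and> linear F1 \<and> linear F2 \<and>
        (\<forall>X. F X = F1 X + F2 X) \<and>
        F1 ` vpart br \<subseteq> vpart br \<and> F1 ` center br \<subseteq> center br \<and>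
        F2 ` vpart br \<subseteq> center br \<and> F2 ` center br \<subseteq> vpart br \<longrightarrow>
        (closed_form br (\<lambda>X Y. F X \<bullet> Y) \<longleftrightarrow>
           skew_symmetric F1 \<and> skew_symmetric F2 \<and>
           (\<forall>Z\<in>center br. \<forall>C\<in>commutator br. F1 Z \<bullet> C = 0) \<and>
           (\<forall>U\<in>vpart br. \<forall>V\<in>vpart br. \<forall>W\<in>vpart br.
              F2 U \<bullet> br V W + F2 V \<bullet> br W U + F2 W \<bullet> br U V = 0)))
    \<and> (\<forall>\<omega>. exact_form br \<omega> \<longleftrightarrow> (\<exists>Z\<in>commutator br. \<omega> = dform br (ell Z)))
    \<and> inj_on (\<lambda>Z. dform br (ell Z)) (commutator br)
    \<and> (\<forall>Z\<in>commutator br.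
          skew_symmetric (jext br Z) \<and>
          (\<forall>V\<in>vpart br. jext br Z V = jmap br Z V) \<and>
          (\<forall>X\<in>center br. jext br Z X = 0) \<and>
          (\<forall>X Y. dform br (ell Z) X Y = jext br Z X \<bullet> Y))
    \<and> inj_on (jext br) (commutator br)"
proof (intro conjI)
  note N = assms
  show "\<forall>F F1 F2. linear F \<and> skew_symmetric F \<and> linear F1 \<and> linear F2 \<and>
        (\<forall>X. F X = F1 X + F2 X) \<and>
        F1 ` vpart br \<subseteq> vpart br \<and> F1 ` center br \<subseteq> center br \<and>
        F2 ` vpart br \<subseteq> center br \<and> F2 ` center br \<subseteq> vpart br \<longrightarrow>
        (closed_form br (\<lambda>X Y. F X \<bullet> Y) \<longleftrightarrow>
           skew_symmetric F1 \<and> skew_symmetric F2 \<and>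
           (\<forall>Z\<in>center br. \<forall>C\<in>commutator br. F1 Z \<bullet> C = 0) \<and>
           (\<forall>U\<in>vpart br. \<forall>V\<in>vpart br. \<forall>W\<in>vpart br.
              F2 U \<bullet> br V W + F2 V \<bullet> br W U + F2 W \<bullet> br U V = 0))"
    apply (intro allI impI, elim conjE)
    by (rule part1[OF N]) assumption+
  show "\<forall>\<omega>. exact_form br \<omega> \<longleftrightarrow> (\<exists>Z\<in>commutator br. \<omega> = dform br (ell Z))"
  proof (intro allI iffI)
    fix \<omega> assume "exact_form br \<omega>"
    then obtain \<eta> where l: "linear \<eta>" and om: "\<omega> = dform br \<eta>" by (auto simp: exact_form_def)
    define w where "w = adjoint \<eta> 1"
    have w: "\<And>X. X \<bullet> w = \<eta> X" using adjoint_works[OF l] unfolding w_def by simp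
    obtain y z where y: "y \<in> span {br U V | U V. True}"
      and z: "\<And>u. u \<in> span {br U V | U V. True} \<Longrightarrow> orthogonal z u"
      and wyz: "w = y + z"
      using orthogonal_subspace_decomp_exists[of "{br U V | U V. True}" w] by blast
    have "\<And>U V. \<eta> (br U V) = y \<bullet> br U V"
    proof -
      fix U V
      have "orthogonal z (br U V)" using z by (auto intro: span_base)
      hence "z \<bullet> br U V = 0" by (simp add: orthogonal_def)
      thus "\<eta> (br U V) = y \<bullet> br U V" using w[of "br U V"] wyz
        by (simp add: inner_add_right inner_commute[of z] inner_commute[of y])
    qed
    hence "\<omega> = dform br (ell y)" using om by (intro ext) (simp add: dform_def ell_def)
    moreover have "y \<in> commutator br" using y by (simp add: commutator_def)
    ultimately show "\<exists>Z\<in>commutator br. \<omega> = dform br (ell Z)" by blast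
  next
    fix \<omega> assume "\<exists>Z\<in>commutator br. \<omega> = dform br (ell Z)"
    then obtain Z where "\<omega> = dform br (ell Z)" by blast
    moreover have "linear (ell Z)" unfolding ell_def
      by (rule linearI) (simp_all add: inner_add_right)
    ultimately show "exact_form br \<omega>" by (auto simp: exact_form_def)
  qed
  show "inj_on (\<lambda>Z. dform br (ell Z)) (commutator br)"
  proof (rule inj_onI)
    fix Z1 Z2 assume Z: "Z1 \<in> commutator br" "Z2 \<in> commutator br"
      and e: "dform br (ell Z1) = dform br (ell Z2)"
    have "\<And>U V. Z1 \<bullet> br U V = Z2 \<bullet> br U V"
      using fun_cong[OF fun_cong[OF e]] by (simp add: dform_def ell_def)
    thus "Z1 = Z2" using eq_on_C Z by blast
  qed
  show "\<forall>Z\<in>commutator br.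
          skew_symmetric (jext br Z) \<and>
          (\<forall>V\<in>vpart br. jext br Z V = jmap br Z V) \<and>
          (\<forall>X\<in>center br. jext br Z X = 0) \<and>
          (\<forall>X Y. dform br (ell Z) X Y = jext br Z X \<bullet> Y)"
  proof (intro ballI conjI allI)
    fix Z
    show "skew_symmetric (jext br Z)" unfolding skew_symmetric_def
    proof (intro allI)
      fix X Y
      have "jext br Z X \<bullet> Y = Z \<bullet> br X Y" using jext_inner[OF N] .
      also have "\<dots> = - (Z \<bullet> br Y X)" using nil_anti[OF N, of X Y] by simp
      also have "\<dots> = - (X \<bullet> jext br Z Y)" using jext_inner[OF N, of Z Y X] by (simp add: inner_commute)
      finally show "jext br Z X \<bullet> Y = - (X \<bullet> jext br Z Y)" .
    qed
    show "\<And>V. V \<in> vpart br \<Longrightarrow> jext br Z V = jmap br Z V"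
    proof -
      fix V assume V: "V \<in> vpart br"
      have "projv br V = V"
        by (rule projv_eq[OF N V]) (simp add: subspace_0[OF subspace_center[OF N]])
      thus "jext br Z V = jmap br Z V" by (simp add: jext_def)
    qed
    show "\<And>X. X \<in> center br \<Longrightarrow> jext br Z X = 0"
    proof -
      fix X assume X: "X \<in> center br"
      have "projv br X = 0"
        by (rule projv_eq[OF N]) (simp_all add: X subspace_0[OF subspace_vpart])
      moreover have "jmap br Z 0 = 0"
      proof -
        have j: "jmap br Z 0 \<in> vpart br" "\<forall>W\<in>vpart br. jmap br Z 0 \<bullet> W = Z \<bullet> br 0 W"
          using jmap[OF N] by auto
        have "jmap br Z 0 \<bullet> jmap br Z 0 = 0" using j bilinear_lzero[OF nil_bil[OF N]] by simp
        thus ?thesis by simp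
      qed
      ultimately show "jext br Z X = 0" by (simp add: jext_def)
    qed
    show "\<And>X Y. dform br (ell Z) X Y = jext br Z X \<bullet> Y"
      using jext_inner[OF N] by (simp add: dform_def ell_def)
  qed
  show "inj_on (jext br) (commutator br)"
  proof (rule inj_onI)
    fix Z1 Z2 assume Z: "Z1 \<in> commutator br" "Z2 \<in> commutator br"
      and e: "jext br Z1 = jext br Z2"
    have "\<And>U V. Z1 \<bullet> br U V = Z2 \<bullet> br U V"
    proof -
      fix U V
      have "Z1 \<bullet> br U V = jext br Z1 U \<bullet> V" by (rule jext_inner[OF N, symmetric])
      also have "\<dots> = jext br Z2 U \<bullet> V" using e by simp
      also have "\<dots> = Z2 \<bullet> br U V" by (rule jext_inner[OF N])
      finally show "Z1 \<bullet> br U V = Z2 \<bullet> br U V" .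
    qed
    thus "Z1 = Z2" using eq_on_C Z by blast
  qed
qed

end
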